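(* Let $d$ be sufficiently large and let $r$ be an even integer with $4\le r\le 2^{-16}d$. For $b\in\{0,1\}$, let $(f,U)\sim\mathcal{D}_b$, and let $B_0$ be the event that $|A[i]-A[j]|\le d/4$ for some distinct $i,j\in[2^{d/64}]$. Then (1) $\Pr_{\mathcal{D}_b}[B_0]\le 2^{-d/32}$ for each $b\in\{0,1\}$; (2) conditioned on $\overline{B_0}$, if $b=0$ then $f$ is Lipschitz, and if $b=1$ then $\ell_{0,U}(f,\mathrm{Lip})\ge\tfrac12$.
   Context: On $\{0,1\}^d$, $|x-y|$ is Hamming distance, $f$ is Lipschitz if $|f(x)-f(y)|\le|x-y|$ for all $x,y$, and $\ell_{0,U}(f,\mathrm{Lip})=\min_{g\text{ Lipschitz}}\Pr_{x\sim U}[f(x)\neq g(x)]$. For $x\in\{0,1\}^d$ and $t>0$, $B(x,t)=\{y:|x-y|<t\}$ (open ball). The distribution $\mathcal{D}_b$ over pairs $(f,U)$ is sampled as follows: (1) sample a list $A$ of $2^{d/64}$ points of $\{0,1\}^d$ independently and uniformly; (2) for each $i\in[2^{d/64}]$ independently choose $A'[i]$ uniformly from $\{y:|A[i]-y|=r-b\}$; (3) define $f(x)=|x-A[i]|$ if $x\in B(A[i],r/2)$ for some $i$; else $f(x)=r-|x-A'[i]|$ if $x\in B(A'[i],r/2)$ for some $i$; else $f(x)=r/2$; (4) let $U$ be the uniform distribution over the set $A\cup A'$ of all these points. *)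

theory Defs
  imports "HOL-Probability.Probability"
begin

definition cube :: "nat \<Rightarrow> bool list set" where
  "cube d = {x. length x = d}"

definition ham :: "bool list \<Rightarrow> bool list \<Rightarrow> nat" where
  "ham x y = card {i. i < length x \<and> x ! i \<noteq> y ! i}"

definition lip :: "nat \<Rightarrow> (bool list \<Rightarrow> real) \<Rightarrow> bool" where
  "lip d g \<longleftrightarrow> (\<forall>x\<in>cube d. \<forall>y\<in>cube d. \<bar>g x - g y\<bar> \<le> real (ham x y))"

text \<open>ell_{0,U}(f,Lip) for U the uniform distribution on the finite set S.\<close>
definition ell0 :: "nat \<Rightarrow> (bool list \<Rightarrow> real) \<Rightarrow> bool list set \<Rightarrow> real" where
  "ell0 d f S = (INF g\<in>{g. lip d g}. measure_pmf.prob (pmf_of_set S) {x. f x \<noteq> g x})"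

definition npts :: "nat \<Rightarrow> nat" where
  "npts d = nat \<lfloor>2 powr (real d / 64)\<rfloor>"

definition Dpairs :: "nat \<Rightarrow> nat \<Rightarrow> nat \<Rightarrow> (bool list list \<times> bool list list) pmf" where
  "Dpairs d r b =
     pmf_of_set {A. length A = npts d \<and> set A \<subseteq> cube d} \<bind>
     (\<lambda>A. map_pmf (\<lambda>A'. (A, A'))
        (pmf_of_set {A'. length A' = npts d \<and> set A' \<subseteq> cube d \<and>
                          (\<forall>i < npts d. ham (A ! i) (A' ! i) = r - b)}))"

text \<open>The function f built from (A, A'); open balls B(x,t) = {y. |x-y| < t}.
  If x lies in several balls, the least index is used (irrelevant off B_0).\<close>
definition hardf :: "nat \<Rightarrow> nat \<Rightarrow> bool list list \<Rightarrow> bool list list \<Rightarrow> bool list \<Rightarrow> real" where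
  "hardf d r A A' x =
     (if \<exists>i < npts d. real (ham x (A ! i)) < real r / 2
      then real (ham x (A ! (LEAST i. i < npts d \<and> real (ham x (A ! i)) < real r / 2)))
      else if \<exists>i < npts d. real (ham x (A' ! i)) < real r / 2
      then real r - real (ham x (A' ! (LEAST i. i < npts d \<and> real (ham x (A' ! i)) < real r / 2)))
      else real r / 2)"

definition B0 :: "nat \<Rightarrow> bool list list \<Rightarrow> bool" where
  "B0 d A \<longleftrightarrow> (\<exists>i < npts d. \<exists>j < npts d. i \<noteq> j \<and> real (ham (A ! i) (A ! j)) \<le> real d / 4)"

end

theory Submission
  imports Defs
begin

definition pop :: "bool list \<Rightarrow> nat" where "pop w = length (filter (\<lambda>b. b) w)"
definition xorl :: "bool list \<Rightarrow> bool list \<Rightarrow> bool list" where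
  "xorl x w = map (\<lambda>i. x ! i \<noteq> w ! i) [0..<length x]"

lemma pop_Cons: "pop (b # w) = (if b then 1 else 0) + pop w"
  by (simp add: pop_def)

lemma length_xorl[simp]: "length (xorl x w) = length x" by (simp add: xorl_def)
lemma nth_xorl[simp]: "i < length x \<Longrightarrow> xorl x w ! i = (x ! i \<noteq> w ! i)" by (simp add: xorl_def)

lemma pop_xorl: "pop (xorl x y) = ham x y"
  unfolding pop_def ham_def length_filter_conv_card by (simp, intro arg_cong[where f=card]) auto

lemma ham_xorl: "length w = length x \<Longrightarrow> ham x (xorl x w) = pop w"
  unfolding pop_def ham_def length_filter_conv_card by (simp, intro arg_cong[where f=card]) auto

lemma xorl_xorl: "length w = length x \<Longrightarrow> xorl x (xorl x w) = w"
  by (rule nth_equalityI) auto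

lemma ham_self[simp]: "ham x x = 0" by (simp add: ham_def)

lemma ham_sym: "length x = length y \<Longrightarrow> ham x y = ham y x"
  unfolding ham_def by metis

lemma ham_tri: assumes "length x = length y" "length y = length z"
  shows "ham x z \<le> ham x y + ham y z"
proof -
  have "{i. i < length x \<and> x ! i \<noteq> z ! i} \<subseteq> {i. i < length x \<and> x ! i \<noteq> y ! i} \<union> {i. i < length y \<and> y ! i \<noteq> z ! i}"
    using assms by auto
  hence "ham x z \<le> card ({i. i < length x \<and> x ! i \<noteq> y ! i} \<union> {i. i < length y \<and> y ! i \<noteq> z ! i})"
    unfolding ham_def by (intro card_mono) auto
  also have "\<dots> \<le> ham x y + ham y z" unfolding ham_def by (rule card_Un_le)
  finally show ?thesis .
qed

lemma ham_trir: assumes "x \<in> cube d" "y \<in> cube d" "z \<in> cube d"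
  shows "real (ham x z) \<le> real (ham x y) + real (ham y z)"
  using ham_tri[of x y z] assms by (simp add: cube_def)

lemma ham_symc: "x \<in> cube d \<Longrightarrow> y \<in> cube d \<Longrightarrow> ham x y = ham y x"
  using ham_sym by (simp add: cube_def)

lemma finite_cube: "finite (cube d)"
proof -
  have "cube d = {xs. set xs \<subseteq> UNIV \<and> length xs = d}" by (auto simp: cube_def)
  thus ?thesis using finite_lists_length_eq[of "UNIV :: bool set" d] by simp
qed

lemma card_cube: "card (cube d) = 2 ^ d"
proof -
  have "cube d = {xs. set xs \<subseteq> UNIV \<and> length xs = d}" by (auto simp: cube_def)
  thus ?thesis using card_lists_length_eq[of "UNIV :: bool set" d] by simp
qed

lemma cube_Suc: "cube (Suc d) = (\<lambda>(b, w). b # w) ` (UNIV \<times> cube d)"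
  by (auto simp: cube_def length_Suc_conv image_iff)

lemma weighted_sum: "(\<Sum>w\<in>cube d. (1/2::real) ^ pop w) = (3/2) ^ d"
proof (induction d)
  case 0
  have "cube 0 = {[]}" by (auto simp: cube_def)
  thus ?case by (simp add: pop_def)
next
  case (Suc d)
  have inj: "inj_on (\<lambda>(b, w). b # w) (UNIV \<times> cube d)" by (auto simp: inj_on_def)
  have "(\<Sum>w\<in>cube (Suc d). (1/2::real) ^ pop w) = (\<Sum>p\<in>UNIV \<times> cube d. (1/2::real) ^ pop (fst p # snd p))"
    unfolding cube_Suc by (subst sum.reindex[OF inj]) (rule sum.cong, auto)
  also have "\<dots> = (\<Sum>b\<in>UNIV. \<Sum>w\<in>cube d. (1/2::real) ^ pop (b # w))"
    using sum.cartesian_product[of "\<lambda>b w. (1/2::real) ^ pop (b # w)" "cube d" UNIV] by (simp add: case_prod_unfold)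
  also have "\<dots> = (1/2 + 1) * (\<Sum>w\<in>cube d. (1/2::real) ^ pop w)"
    by (simp add: UNIV_bool pop_Cons flip: sum_divide_distrib sum_distrib_left)
  also have "\<dots> = (3/2)^Suc d" using Suc by simp
  finally show ?case .
qed


lemma finite_S: "finite {A. length A = n \<and> set A \<subseteq> cube d}"
  using finite_lists_length_eq[OF finite_cube, of d n] by (simp add: conj_commute)

lemma count_E:
  fixes n d i j :: nat
  assumes ij: "i < n" "j < n" "i \<noteq> j"
  defines "S \<equiv> {A. length A = n \<and> set A \<subseteq> cube d}"
    and "W \<equiv> {w\<in>cube d. real (pop w) \<le> real d / 4}"
  shows "card (S \<inter> {A. real (ham (A!i) (A!j)) \<le> real d / 4}) * 2^d = card W * card S"
proof -
  define E where "E = S \<inter> {A. real (ham (A!i) (A!j)) \<le> real d / 4}"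
  define h where "h = (\<lambda>(A::bool list list, y::bool list). (xorl (A!i) (A!j), A[j := y]))"
  define k where "k = (\<lambda>(w::bool list, B::bool list list). (B[j := xorl (B!i) w], B!j))"
  have mem: "A \<in> S \<Longrightarrow> l < n \<Longrightarrow> A ! l \<in> cube d" for A l
    by (auto simp: S_def)
  have upd: "A \<in> S \<Longrightarrow> y \<in> cube d \<Longrightarrow> A[j := y] \<in> S" for A y
    using set_update_subset_insert[of A j y] by (auto simp: S_def)
  have "bij_betw h (E \<times> cube d) (W \<times> S)"
  proof (rule bij_betw_byWitness[where f'=k])
    show "\<forall>a\<in>E \<times> cube d. k (h a) = a"
    proof
      fix a assume "a \<in> E \<times> cube d"
      then obtain A y where a: "a = (A, y)" "A \<in> S" "y \<in> cube d" by (auto simp: E_def)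
      have l: "length (A!i) = d" "length (A!j) = d" using mem[OF a(2)] ij by (auto simp: cube_def)
      have lA: "length A = n" using a(2) by (simp add: S_def)
      show "k (h a) = a" using a ij l lA by (simp add: h_def k_def xorl_xorl)
    qed
    show "\<forall>a\<in>W \<times> S. h (k a) = a"
    proof
      fix a assume "a \<in> W \<times> S"
      then obtain w B where a: "a = (w, B)" "B \<in> S" "w \<in> W" by auto
      have l: "length (B!i) = d" "length w = d" using mem[OF a(2)] ij a(3) by (auto simp: cube_def W_def)
      have lB: "length B = n" using a(2) by (simp add: S_def)
      show "h (k a) = a" using a ij l lB by (simp add: h_def k_def xorl_xorl)
    qed
    show "h ` (E \<times> cube d) \<subseteq> W \<times> S"
    proof
      fix z assume "z \<in> h ` (E \<times> cube d)"
      then obtain A y where z: "z = h (A, y)" "A \<in> E" "y \<in> cube d" by auto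
      hence A: "A \<in> S" "real (ham (A!i) (A!j)) \<le> real d / 4" by (auto simp: E_def)
      have l: "length (A!i) = d" using mem[OF A(1)] ij by (auto simp: cube_def)
      show "z \<in> W \<times> S" unfolding z(1) using A upd[OF A(1) z(3)] l
        by (simp add: h_def W_def pop_xorl cube_def)
    qed
    show "k ` (W \<times> S) \<subseteq> E \<times> cube d"
    proof
      fix z assume "z \<in> k ` (W \<times> S)"
      then obtain w B where z: "z = k (w, B)" "w \<in> W" "B \<in> S" by auto
      have l: "length (B!i) = d" "length w = d" using mem[OF \<open>B \<in> S\<close>] ij \<open>w \<in> W\<close> by (auto simp: cube_def W_def)
      have lB: "length B = n" using \<open>B \<in> S\<close> by (simp add: S_def)
      have c: "xorl (B!i) w \<in> cube d" using l by (simp add: cube_def)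
      show "z \<in> E \<times> cube d" unfolding z(1)
        using upd[OF \<open>B \<in> S\<close> c] mem[OF \<open>B \<in> S\<close> ij(2)] \<open>w \<in> W\<close> ij l lB
        by (simp add: k_def E_def W_def ham_xorl)
    qed
  qed
  hence "card (E \<times> cube d) = card (W \<times> S)" by (rule bij_betw_same_card)
  thus ?thesis by (simp add: card_cartesian_product card_cube E_def)
qed


lemma card_W: "real (card {w\<in>cube d. real (pop w) \<le> real d / 4}) \<le> 2 powr (real d / 4) * (3/2)^d"
proof -
  define W where "W = {w\<in>cube d. real (pop w) \<le> real d / 4}"
  have fW: "finite W" using finite_cube by (simp add: W_def)
  have "real (card W) * (1/2) powr (real d / 4) = (\<Sum>w\<in>W. (1/2::real) powr (real d / 4))" by simp
  also have "\<dots> \<le> (\<Sum>w\<in>W. (1/2::real) ^ pop w)"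
  proof (rule sum_mono)
    fix w assume "w \<in> W"
    hence "real (pop w) \<le> real d / 4" by (simp add: W_def)
    hence "(1/2::real) powr (real d / 4) \<le> (1/2) powr (real (pop w))" by (intro powr_mono') auto
    thus "(1/2::real) powr (real d / 4) \<le> (1/2) ^ pop w" by (simp add: powr_realpow)
  qed
  also have "\<dots> \<le> (\<Sum>w\<in>cube d. (1/2::real) ^ pop w)"
    by (intro sum_mono2 finite_cube) (auto simp: W_def)
  also have "\<dots> = (3/2)^d" by (rule weighted_sum)
  finally have *: "real (card W) * (1/2) powr (real d / 4) \<le> (3/2)^d" .
  have a1: "(1/2::real) powr (real d / 4) * 2 powr (real d / 4) = 1"
    by (simp add: powr_divide)
  have "real (card W) = real (card W) * (1/2) powr (real d / 4) * 2 powr (real d / 4)"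
    by (simp only: mult.assoc a1 mult_1_right)
  also have "\<dots> \<le> (3/2)^d * 2 powr (real d / 4)" by (intro mult_right_mono *) simp
  finally have "real (card W) \<le> (3/2)^d * 2 powr (real d / 4)" .
  thus ?thesis unfolding W_def by (simp only: mult.commute)
qed

lemma npts_sq: "real (npts d) * real (npts d) \<le> 2 powr (real d / 32)"
proof -
  have a: "real (npts d) \<le> 2 powr (real d / 64)"
    unfolding npts_def by (simp add: of_nat_nat)
  have "real (npts d) * real (npts d) \<le> 2 powr (real d / 64) * 2 powr (real d / 64)"
    by (intro mult_mono a) auto
  also have "\<dots> = 2 powr (real d / 32)" by (simp flip: powr_add)
  finally show ?thesis .
qed

lemma npts_pos: "npts d \<ge> 1"
proof -
  have "(1::real) \<le> 2 powr (real d / 64)" by (rule ge_one_powr_ge_zero) auto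
  thus ?thesis unfolding npts_def by linarith
qed

lemma arith_final: "2 powr (real d / 32) * (2 powr (real d / 4) * (3/2)^d) / 2^d \<le> 2 powr (- (real d / 32))"
proof -
  have p3: "(3::real)^d = 3 powr real d" by (rule powr_realpow[symmetric]) simp
  have "(3::real) powr real d = (3 powr 16) powr (real d / 16)" by (simp add: powr_powr)
  also have "\<dots> \<le> (2 powr 27) powr (real d / 16)"
    by (intro powr_mono2) (auto simp: powr_numeral)
  also have "\<dots> = 2 powr (27 * real d / 16)" unfolding powr_powr by simp
  finally have t0: "(3::real) powr real d \<le> 2 powr (27 * real d / 16)" .
  have t: "(3::real) ^ d \<le> 2 powr (27 * real d / 16)" using t0 p3 by linarith
  have q: "2 powr (2 * real d) = (2::real)^d * 2^d"
  proof -
    have "(2::real) powr (2 * real d) = 2 powr (real d + real d)" by (rule arg_cong[where f="\<lambda>x. 2 powr x"]) simp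
    also have "\<dots> = 2 powr real d * 2 powr real d" by (rule powr_add)
    also have "\<dots> = (2::real)^d * 2^d" using powr_realpow[of 2 d] by simp
    finally show ?thesis .
  qed
  have e: "(3/2::real)^d / 2^d = 3^d / 2 powr (2 * real d)"
    unfolding q by (simp add: power_divide)
  have "2 powr (real d / 32) * (2 powr (real d / 4) * (3/2)^d) / 2^d
      = 2 powr (real d / 32) * 2 powr (real d / 4) * ((3/2)^d / 2^d)" by (simp only: mult.assoc times_divide_eq_right)
  also have "\<dots> = 2 powr (real d / 32) * 2 powr (real d / 4) * 3^d / 2 powr (2 * real d)"
    unfolding e by (simp only: times_divide_eq_right)
  also have "\<dots> \<le> 2 powr (real d / 32) * 2 powr (real d / 4) * 2 powr (27 * real d / 16) / 2 powr (2 * real d)"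
    by (intro divide_right_mono mult_left_mono t) auto
  also have "\<dots> = 2 powr (real d / 32 + real d / 4 + 27 * real d / 16 - 2 * real d)"
    by (simp only: powr_add powr_diff)
  also have "(2::real) powr (real d / 32 + real d / 4 + 27 * real d / 16 - 2 * real d) = 2 powr (- (real d / 32))"
    by (rule arg_cong[where f="\<lambda>x. 2 powr x"]) simp
  finally show ?thesis .
qed

lemma part1_S:
  "measure_pmf.prob (pmf_of_set {A. length A = npts d \<and> set A \<subseteq> cube d}) {A. B0 d A}
     \<le> 2 powr (- (real d / 32))"
proof -
  define n where "n = npts d"
  define S where "S = {A. length A = n \<and> set A \<subseteq> cube d}"
  define W where "W = {w\<in>cube d. real (pop w) \<le> real d / 4}"
  define E where "E = (\<lambda>i j. S \<inter> {A. real (ham (A!i) (A!j)) \<le> real d / 4})"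
  have fS: "finite S" unfolding S_def by (rule finite_S)
  have neS: "S \<noteq> {}"
  proof -
    have "replicate n (replicate d False) \<in> S" by (auto simp: S_def cube_def)
    thus ?thesis by auto
  qed
  have cS: "card S > 0" using fS neS card_gt_0_iff by blast
  define c where "c = real (card W) * real (card S) / 2^d"
  have cE: "i < n \<Longrightarrow> j < n \<Longrightarrow> i \<noteq> j \<Longrightarrow> real (card (E i j)) = c" for i j
  proof -
    assume "i < n" "j < n" "i \<noteq> j"
    from count_E[OF this, of d] have h: "card (E i j) * 2^d = card W * card S"
      unfolding E_def S_def W_def .
    have "real (card (E i j)) * 2^d = real (card W) * real (card S)"
      using arg_cong[OF h, of real] by simp
    thus ?thesis unfolding c_def by (simp add: field_simps)
  qed
  have sub: "S \<inter> {A. B0 d A} \<subseteq> (\<Union>i\<in>{..<n}. \<Union>j\<in>{..<n}-{i}. E i j)"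
    by (auto simp: B0_def E_def n_def)
  have "card (S \<inter> {A. B0 d A}) \<le> card (\<Union>i\<in>{..<n}. \<Union>j\<in>{..<n}-{i}. E i j)"
    by (intro card_mono sub) (auto simp: E_def fS)
  also have "\<dots> \<le> (\<Sum>i\<in>{..<n}. card (\<Union>j\<in>{..<n}-{i}. E i j))" by (rule card_UN_le) simp
  also have "\<dots> \<le> (\<Sum>i\<in>{..<n}. \<Sum>j\<in>{..<n}-{i}. card (E i j))"
    by (intro sum_mono card_UN_le) simp
  finally have N: "card (S \<inter> {A. B0 d A}) \<le> (\<Sum>i\<in>{..<n}. \<Sum>j\<in>{..<n}-{i}. card (E i j))" .
  have "real (card (S \<inter> {A. B0 d A})) \<le> real (\<Sum>i\<in>{..<n}. \<Sum>j\<in>{..<n}-{i}. card (E i j))"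
    using N by (rule of_nat_mono)
  also have "\<dots> = (\<Sum>i\<in>{..<n}. \<Sum>j\<in>{..<n}-{i}. real (card (E i j)))" by simp
  also have "\<dots> = (\<Sum>i\<in>{..<n}. \<Sum>j\<in>{..<n}-{i}. c)"
    by (intro sum.cong refl) (auto simp: cE)
  also have "\<dots> \<le> (\<Sum>i\<in>{..<n}. \<Sum>j\<in>{..<n}. c)"
    by (intro sum_mono sum_mono2) (auto simp: c_def)
  also have "\<dots> = real n * real n * c" by simp
  finally have B: "real (card (S \<inter> {A. B0 d A})) \<le> real n * real n * c" .
  have "measure_pmf.prob (pmf_of_set S) {A. B0 d A} = real (card (S \<inter> {A. B0 d A})) / real (card S)"
    using measure_pmf_of_set[OF neS fS] .
  also have "\<dots> \<le> real n * real n * c / real (card S)" using B cS by (intro divide_right_mono) auto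
  also have "\<dots> = real n * real n * real (card W) / 2^d" using cS by (simp add: c_def)
  also have "\<dots> \<le> 2 powr (real d / 32) * (2 powr (real d / 4) * (3/2)^d) / 2^d"
    unfolding n_def W_def by (intro divide_right_mono mult_mono npts_sq card_W) auto
  also have "\<dots> \<le> 2 powr (- (real d / 32))" by (rule arith_final)
  finally show ?thesis unfolding S_def n_def .
qed

lemma Dpairs_fst: "map_pmf fst (Dpairs d r b) = pmf_of_set {A. length A = npts d \<and> set A \<subseteq> cube d}"
  unfolding Dpairs_def map_bind_pmf by (simp add: map_pmf_comp comp_def bind_return_pmf')

lemma part1: "measure_pmf.prob (Dpairs d r b) {p. B0 d (fst p)} \<le> 2 powr (- (real d / 32))"
proof -
  have "measure_pmf.prob (Dpairs d r b) {p. B0 d (fst p)} = measure_pmf.prob (map_pmf fst (Dpairs d r b)) {A. B0 d A}"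
    by (simp add: measure_map_pmf vimage_def)
  thus ?thesis using part1_S[of d] by (simp add: Dpairs_fst)
qed

abbreviation D :: "bool list \<Rightarrow> bool list \<Rightarrow> real" where "D x y \<equiv> real (ham x y)"

lemma far:
  assumes "x \<in> cube d" "y \<in> cube d" "c \<in> cube d" "c' \<in> cube d"
    "D x c < real r / 2" "D y c' < real r / 2" "2 * real r \<le> D c c'"
  shows "real r \<le> D x y"
proof -
  have "D c c' \<le> D c x + D x c'" using ham_trir[OF assms(3,1,4)] .
  moreover have "D x c' \<le> D x y + D y c'" using ham_trir[OF assms(1,2,4)] .
  moreover have "D c x = D x c" using ham_symc[OF assms(3,1)] by simp
  ultimately show ?thesis using assms by linarith
qed

locale hs =
  fixes d r b :: nat and A A' :: "bool list list"
  assumes lenA: "length A = npts d" and lenA': "length A' = npts d"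
  and cA: "set A \<subseteq> cube d" and cA': "set A' \<subseteq> cube d"
  and dAA': "\<forall>i<npts d. ham (A!i) (A'!i) = r - b"
  and nB0: "\<not> B0 d A"
  and r4: "4 \<le> r" and b1: "b \<le> 1"
  and rd: "8 * real r \<le> real d / 4"
begin

abbreviation "n \<equiv> npts d"
abbreviation "f \<equiv> hardf d r A A'"

lemma inA: "i < n \<Longrightarrow> A!i \<in> cube d"
proof -
  assume "i < n" hence "A!i \<in> set A" using lenA by simp
  thus ?thesis using cA by blast
qed
lemma inA': "i < n \<Longrightarrow> A'!i \<in> cube d"
proof -
  assume "i < n" hence "A'!i \<in> set A'" using lenA' by simp
  thus ?thesis using cA' by blast
qed

lemma farAA: "i < n \<Longrightarrow> j < n \<Longrightarrow> i \<noteq> j \<Longrightarrow> 8 * real r < D (A!i) (A!j)"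
proof -
  assume h: "i < n" "j < n" "i \<noteq> j"
  have "\<not> D (A!i) (A!j) \<le> real d / 4" using nB0 h unfolding B0_def by blast
  thus ?thesis using rd by linarith
qed

lemma hAA': "i < n \<Longrightarrow> D (A!i) (A'!i) = real r - real b"
proof -
  assume "i < n"
  hence "ham (A!i) (A'!i) = r - b" using dAA' by blast
  moreover have "b \<le> r" using b1 r4 by linarith
  ultimately show ?thesis by (simp add: of_nat_diff)
qed

lemma AA'_le: "i < n \<Longrightarrow> D (A!i) (A'!i) \<le> real r"
  using hAA' by simp

lemma AA'_ge: "i < n \<Longrightarrow> real r - 1 \<le> D (A!i) (A'!i)"
  using hAA' b1 by simp

lemma farA'A': assumes "i < n" "j < n" "i \<noteq> j" shows "4 * real r \<le> D (A'!i) (A'!j)"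
proof -
  have "D (A!i) (A!j) \<le> D (A!i) (A'!i) + D (A'!i) (A!j)" using ham_trir[OF inA[OF assms(1)] inA'[OF assms(1)] inA[OF assms(2)]] .
  moreover have "D (A'!i) (A!j) \<le> D (A'!i) (A'!j) + D (A'!j) (A!j)" using ham_trir[OF inA'[OF assms(1)] inA'[OF assms(2)] inA[OF assms(2)]] .
  moreover have "D (A'!j) (A!j) = D (A!j) (A'!j)" using ham_symc[OF inA'[OF assms(2)] inA[OF assms(2)]] by simp
  ultimately show ?thesis using farAA[OF assms] AA'_le[OF assms(1)] AA'_le[OF assms(2)] by linarith
qed

lemma farAA': assumes "i < n" "j < n" "i \<noteq> j" shows "4 * real r \<le> D (A!i) (A'!j)"
proof -
  have "D (A!i) (A!j) \<le> D (A!i) (A'!j) + D (A'!j) (A!j)" using ham_trir[OF inA[OF assms(1)] inA'[OF assms(2)] inA[OF assms(2)]] .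
  moreover have "D (A'!j) (A!j) = D (A!j) (A'!j)" using ham_symc[OF inA'[OF assms(2)] inA[OF assms(2)]] by simp
  ultimately show ?thesis using farAA[OF assms] AA'_le[OF assms(2)] by linarith
qed

lemma fcases:
  obtains (a) k where "k < n" "D x (A!k) < real r / 2" "f x = D x (A!k)"
  | (b) k where "\<forall>i<n. real r / 2 \<le> D x (A!i)" "k < n" "D x (A'!k) < real r / 2" "f x = real r - D x (A'!k)"
  | (c) "\<forall>i<n. real r / 2 \<le> D x (A!i)" "\<forall>i<n. real r / 2 \<le> D x (A'!i)" "f x = real r / 2"
proof -
  consider (1) "\<exists>i<n. D x (A!i) < real r / 2"
    | (2) "\<not> (\<exists>i<n. D x (A!i) < real r / 2)" "\<exists>i<n. D x (A'!i) < real r / 2"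
    | (3) "\<not> (\<exists>i<n. D x (A!i) < real r / 2)" "\<not> (\<exists>i<n. D x (A'!i) < real r / 2)" by blast
  thus ?thesis
  proof cases
    case 1
    define k where "k = (LEAST i. i < n \<and> D x (A!i) < real r / 2)"
    have k: "k < n \<and> D x (A!k) < real r / 2" unfolding k_def using LeastI_ex[of "\<lambda>i. i < n \<and> D x (A!i) < real r / 2"] 1 by blast
    have "f x = D x (A!k)" unfolding hardf_def k_def using 1 by simp
    thus ?thesis using a k by blast
  next
    case 2
    define k where "k = (LEAST i. i < n \<and> D x (A'!i) < real r / 2)"
    have k: "k < n \<and> D x (A'!k) < real r / 2" unfolding k_def using LeastI_ex[of "\<lambda>i. i < n \<and> D x (A'!i) < real r / 2"] 2(2) by blast
    have "f x = real r - D x (A'!k)" by (simp only: hardf_def if_not_P[OF 2(1)] if_P[OF 2(2)] k_def)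
    moreover have "\<forall>i<n. real r / 2 \<le> D x (A!i)"
    proof (intro allI impI)
      fix i assume "i < n"
      hence "\<not> D x (A!i) < real r / 2" using 2(1) by blast
      thus "real r / 2 \<le> D x (A!i)" by linarith
    qed
    ultimately show ?thesis using b k by blast
  next
    case 3
    have "f x = real r / 2" by (simp only: hardf_def if_not_P[OF 3(1)] if_not_P[OF 3(2)])
    moreover have "\<forall>i<n. real r / 2 \<le> D x (A!i)"
    proof (intro allI impI)
      fix i assume "i < n"
      hence "\<not> D x (A!i) < real r / 2" using 3(1) by blast
      thus "real r / 2 \<le> D x (A!i)" by linarith
    qed
    moreover have "\<forall>i<n. real r / 2 \<le> D x (A'!i)"
    proof (intro allI impI)
      fix i assume "i < n"
      hence "\<not> D x (A'!i) < real r / 2" using 3(2) by blast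
      thus "real r / 2 \<le> D x (A'!i)" by linarith
    qed
    ultimately show ?thesis using c by blast
  qed
qed

lemma f_bounds: "0 \<le> f x \<and> f x \<le> real r"
proof (cases x rule: fcases)
  case (a k) thus ?thesis by simp
next
  case (b k) thus ?thesis by simp
next
  case c thus ?thesis by simp
qed

lemma lip_one:
  assumes b0: "b = 0" and x: "x \<in> cube d" and y: "y \<in> cube d"
  shows "f x - f y \<le> D x y"
proof -
  have tri: "\<And>u v w. u \<in> cube d \<Longrightarrow> v \<in> cube d \<Longrightarrow> w \<in> cube d \<Longrightarrow> D u w \<le> D u v + D v w"
    by (rule ham_trir)
  have sym: "\<And>u v. u \<in> cube d \<Longrightarrow> v \<in> cube d \<Longrightarrow> D u v = D v u"
    by (simp add: ham_symc[of _ d])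
  have fb: "0 \<le> f x" "f x \<le> real r" "0 \<le> f y" "f y \<le> real r" using f_bounds[of x] f_bounds[of y] by auto
  have r0: "0 \<le> real r" by simp
  show ?thesis
  proof (cases x rule: fcases)
    case xa: (a k)
    show ?thesis
    proof (cases y rule: fcases)
      case ya: (a l)
      show ?thesis
      proof (cases "k = l")
        case True
        have "D x (A!k) \<le> D x y + D y (A!k)" using tri[OF x y inA[OF xa(1)]] .
        moreover have "f y = D y (A!k)" "D y (A!k) < real r / 2" using ya True by auto
        ultimately show ?thesis using xa by linarith
      next
        case False
        have "8 * real r < D (A!k) (A!l)" using farAA[OF xa(1) ya(1) False] .
        hence "2 * real r \<le> D (A!k) (A!l)" by linarith
        hence "real r \<le> D x y" using far[OF x y inA[OF xa(1)] inA[OF ya(1)] xa(2) ya(2)] by blast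
        thus ?thesis using fb by linarith
      qed
    next
      case yb: (b l)
      thus ?thesis using xa fb by linarith
    next
      case yc: c
      thus ?thesis using xa fb by linarith
    qed
  next
    case xb: (b k)
    show ?thesis
    proof (cases y rule: fcases)
      case ya: (a l)
      show ?thesis
      proof (cases "k = l")
        case True
        have "D (A!k) (A'!k) \<le> D (A!k) y + D y (A'!k)" using tri[OF inA[OF xb(2)] y inA'[OF xb(2)]] .
        moreover have "D y (A'!k) \<le> D y x + D x (A'!k)" using tri[OF y x inA'[OF xb(2)]] .
        moreover have "D (A!k) y = D y (A!k)" "D y x = D x y" using sym[OF inA[OF xb(2)] y] sym[OF y x] by auto
        moreover have "D (A!k) (A'!k) = real r" using dAA' b0 xb by simp
        moreover have "f y = D y (A!k)" "D y (A!k) < real r / 2" using ya True by auto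
        ultimately show ?thesis using xb by linarith
      next
        case False
        have "4 * real r \<le> D (A!l) (A'!k)" using farAA'[of l k] xb ya False by auto
        moreover have "D (A'!k) (A!l) = D (A!l) (A'!k)" using sym[OF inA'[OF xb(2)] inA[OF ya(1)]] .
        ultimately have "2 * real r \<le> D (A'!k) (A!l)" by linarith
        hence "real r \<le> D x y" using far[OF x y inA'[OF xb(2)] inA[OF ya(1)] xb(3) ya(2)] by blast
        thus ?thesis using fb by linarith
      qed
    next
      case yb: (b l)
      show ?thesis
      proof (cases "k = l")
        case True
        have "D y (A'!k) \<le> D y x + D x (A'!k)" using tri[OF y x inA'[OF xb(2)]] .
        moreover have "D y x = D x y" using sym[OF y x] .
        moreover have "f y = real r - D y (A'!k)" using yb True by auto
        ultimately show ?thesis using xb by linarith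
      next
        case False
        have "4 * real r \<le> D (A'!k) (A'!l)" using farA'A'[OF xb(2) yb(2) False] .
        hence "2 * real r \<le> D (A'!k) (A'!l)" by linarith
        hence "real r \<le> D x y" using far[OF x y inA'[OF xb(2)] inA'[OF yb(2)] xb(3) yb(3)] by blast
        thus ?thesis using fb by linarith
      qed
    next
      case yc: c
      have "D y (A'!k) \<le> D y x + D x (A'!k)" using tri[OF y x inA'[OF xb(2)]] .
      moreover have "D y x = D x y" using sym[OF y x] .
      moreover have "real r / 2 \<le> D y (A'!k)" using yc(2) xb(2) by blast
      ultimately show ?thesis using xb(3,4) yc(3) by linarith
    qed
  next
    case xc: c
    show ?thesis
    proof (cases y rule: fcases)
      case ya: (a l)
      have "D x (A!l) \<le> D x y + D y (A!l)" using tri[OF x y inA[OF ya(1)]] .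
      moreover have "real r / 2 \<le> D x (A!l)" using xc(1) ya(1) by blast
      ultimately show ?thesis using xc(3) ya(2,3) by linarith
    next
      case yb: (b l)
      thus ?thesis using xc(3) by linarith
    next
      case yc: c
      thus ?thesis using xc(3) by linarith
    qed
  qed
qed

lemma lip_f: "b = 0 \<Longrightarrow> lip d f"
  unfolding lip_def
proof (intro ballI)
  fix x y assume h: "b = 0" "x \<in> cube d" "y \<in> cube d"
  have "D y x = D x y" using ham_symc[OF h(3,2)] by simp
  moreover have "f x - f y \<le> D x y" "f y - f x \<le> D y x" using lip_one[OF h] lip_one[OF h(1,3,2)] by auto
  ultimately show "\<bar>f x - f y\<bar> \<le> D x y" by linarith
qed


lemma npos: "1 \<le> n"
proof -
  have "(1::real) \<le> 2 powr (real d / 64)" by (rule ge_one_powr_ge_zero) auto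
  thus ?thesis unfolding npts_def by linarith
qed

lemma fA: assumes i: "i < n" shows "f (A!i) = 0"
proof (cases "A!i" rule: fcases)
  case (a k)
  show ?thesis
  proof (cases "k = i")
    case True thus ?thesis using a by simp
  next
    case False
    have "8 * real r < D (A!i) (A!k)" using farAA[OF i a(1)] False by auto
    thus ?thesis using a(2) by linarith
  qed
next
  case (b k)
  have "real r / 2 \<le> D (A!i) (A!i)" using b(1) i by blast
  thus ?thesis using r4 by simp
next
  case c
  have "real r / 2 \<le> D (A!i) (A!i)" using c(1) i by blast
  thus ?thesis using r4 by simp
qed

lemma fA': assumes i: "i < n" shows "f (A'!i) = real r"
proof (cases "A'!i" rule: fcases)
  case (a k)
  have s: "D (A'!i) (A!k) = D (A!k) (A'!i)" using ham_symc[OF inA'[OF i] inA[OF a(1)]] by simp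
  show ?thesis
  proof (cases "k = i")
    case True
    have "real r - 1 \<le> D (A!k) (A'!i)" using AA'_ge[OF i] True by simp
    thus ?thesis using a(2) s r4 by linarith
  next
    case False
    have "4 * real r \<le> D (A!k) (A'!i)" using farAA'[OF a(1) i False] .
    thus ?thesis using a(2) s r4 by linarith
  qed
next
  case (b k)
  show ?thesis
  proof (cases "k = i")
    case True thus ?thesis using b by simp
  next
    case False
    have "4 * real r \<le> D (A'!i) (A'!k)" using farA'A'[OF i b(2)] False by auto
    thus ?thesis using b(3) r4 by linarith
  qed
next
  case c
  have "real r / 2 \<le> D (A'!i) (A'!i)" using c(2) i by blast
  thus ?thesis using r4 by simp
qed

lemma ell_half: assumes b1': "b = 1" shows "1/2 \<le> ell0 d f (set A \<union> set A')"
  unfolding ell0_def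
proof (rule cINF_greatest)
  show "{g. lip d g} \<noteq> {}"
  proof -
    have "lip d (\<lambda>_. 0)" by (simp add: lip_def)
    thus ?thesis by blast
  qed
next
  fix g assume "g \<in> {g. lip d g}"
  hence g: "\<And>x y. x \<in> cube d \<Longrightarrow> y \<in> cube d \<Longrightarrow> \<bar>g x - g y\<bar> \<le> D x y"
    by (auto simp: lip_def)
  define U where "U = set A \<union> set A'"
  define Ds where "Ds = {x. f x \<noteq> g x}"
  have dis: "f (A!i) \<noteq> g (A!i) \<or> f (A'!i) \<noteq> g (A'!i)" if i: "i < n" for i
  proof (rule ccontr)
    assume "\<not> ?thesis"
    hence e: "g (A!i) = 0" "g (A'!i) = real r" using fA[OF i] fA'[OF i] by auto
    have "\<bar>g (A!i) - g (A'!i)\<bar> \<le> D (A!i) (A'!i)" using g[OF inA[OF i] inA'[OF i]] .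
    moreover have "D (A!i) (A'!i) = real r - 1" using hAA'[OF i] b1' by simp
    ultimately show False using e by simp
  qed
  define p where "p = (\<lambda>i. if f (A!i) \<noteq> g (A!i) then A!i else A'!i)"
  have pU: "p i \<in> U \<inter> Ds" if i: "i < n" for i
  proof -
    have "A!i \<in> U" "A'!i \<in> U" using i lenA lenA' by (auto simp: U_def)
    thus ?thesis using dis[OF i] by (auto simp: p_def Ds_def)
  qed
  have pc: "p i \<in> cube d" if i: "i < n" for i using inA[OF i] inA'[OF i] by (simp add: p_def)
  have pn: "D (A!i) (p i) \<le> real r" if i: "i < n" for i
    using AA'_le[OF i] r4 by (simp add: p_def)
  have inj: "inj_on p {..<n}"
  proof (rule inj_onI)
    fix i j assume i: "i \<in> {..<n}" and j: "j \<in> {..<n}" and e: "p i = p j"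
    show "i = j"
    proof (rule ccontr)
      assume ne: "i \<noteq> j"
      have i': "i < n" and j': "j < n" using i j by auto
      have "D (A!i) (A!j) \<le> D (A!i) (p i) + D (p i) (A!j)"
        using ham_trir[OF inA[OF i'] pc[OF i'] inA[OF j']] .
      moreover have "D (p i) (A!j) = D (A!j) (p j)" using e ham_symc[OF pc[OF j'] inA[OF j']] by simp
      moreover have "8 * real r < D (A!i) (A!j)" using farAA[OF i' j' ne] .
      ultimately show False using pn[OF i'] pn[OF j'] by linarith
    qed
  qed
  have fU: "finite U" by (simp add: U_def)
  have "n = card (p ` {..<n})" using card_image[OF inj] by simp
  also have "\<dots> \<le> card (U \<inter> Ds)" by (intro card_mono) (use fU pU in auto)
  finally have c1: "n \<le> card (U \<inter> Ds)" .
  have "card U \<le> card (set A) + card (set A')" unfolding U_def by (rule card_Un_le)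
  also have "\<dots> \<le> n + n" using card_length[of A] card_length[of A'] lenA lenA' by linarith
  finally have c2: "card U \<le> 2 * n" by simp
  have "A!0 \<in> U" using npos lenA by (auto simp: U_def)
  hence neU: "U \<noteq> {}" by blast
  hence cU: "0 < card U" using fU by (simp add: card_gt_0_iff)
  have "measure_pmf.prob (pmf_of_set U) Ds = real (card (U \<inter> Ds)) / real (card U)"
    by (rule measure_pmf_of_set[OF neU fU])
  moreover have "real (card U) / 2 / real (card U) = 1/2" using cU by simp
  moreover have "real (card U) / 2 / real (card U) \<le> real (card (U \<inter> Ds)) / real (card U)"
    by (rule divide_right_mono) (use c1 c2 in linarith, simp)
  ultimately have "1/2 \<le> measure_pmf.prob (pmf_of_set U) Ds" by linarith
  thus "1/2 \<le> measure_pmf.prob (pmf_of_set (set A \<union> set A')) {x. f x \<noteq> g x}"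
    by (simp add: U_def Ds_def)
qed

end

definition flipk :: "nat \<Rightarrow> bool list \<Rightarrow> bool list" where
  "flipk k x = map (\<lambda>i. if i < k then \<not> x ! i else x ! i) [0..<length x]"

lemma ham_flipk: "k \<le> length x \<Longrightarrow> ham x (flipk k x) = k"
proof -
  assume k: "k \<le> length x"
  have "{i. i < length x \<and> x ! i \<noteq> flipk k x ! i} = {..<k}"
    using k by (auto simp: flipk_def)
  thus ?thesis by (simp add: ham_def)
qed

lemma length_flipk[simp]: "length (flipk k x) = length x" by (simp add: flipk_def)

lemma set_Dpairs:
  assumes rb: "r - b \<le> d" and p: "p \<in> set_pmf (Dpairs d r b)"
  shows "length (fst p) = npts d \<and> set (fst p) \<subseteq> cube d \<and> length (snd p) = npts d \<and>
         set (snd p) \<subseteq> cube d \<and> (\<forall>i<npts d. ham (fst p ! i) (snd p ! i) = r - b)"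
proof -
  define S where "S = {A. length A = npts d \<and> set A \<subseteq> cube d}"
  define S' where "S' = (\<lambda>A. {A'. length A' = npts d \<and> set A' \<subseteq> cube d \<and>
                          (\<forall>i < npts d. ham (A ! i) (A' ! i) = r - b)})"
  have fS: "finite S" unfolding S_def by (rule finite_S)
  have neS: "S \<noteq> {}"
  proof -
    have "replicate (npts d) (replicate d False) \<in> S" by (auto simp: S_def cube_def)
    thus ?thesis by auto
  qed
  have fS': "finite (S' A)" for A
    by (rule finite_subset[OF _ finite_S[of "npts d" d]]) (auto simp: S'_def)
  have neS': "S' A \<noteq> {}" if A: "A \<in> S" for A
  proof -
    have "map (flipk (r - b)) A \<in> S' A"
    proof -
      have "\<forall>x\<in>set A. length x = d" using A by (auto simp: S_def cube_def)
      hence "set (map (flipk (r - b)) A) \<subseteq> cube d" by (auto simp: cube_def)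
      moreover have "ham (A ! i) (map (flipk (r - b)) A ! i) = r - b" if i: "i < npts d" for i
      proof -
        have "A ! i \<in> set A" using i A by (simp add: S_def)
        hence "length (A ! i) = d" using A by (auto simp: S_def cube_def)
        thus ?thesis using i A rb by (simp add: S_def ham_flipk)
      qed
      ultimately show ?thesis using A by (simp add: S'_def S_def)
    qed
    thus ?thesis by blast
  qed
  have "Dpairs d r b = pmf_of_set S \<bind> (\<lambda>A. map_pmf (Pair A) (pmf_of_set (S' A)))"
    unfolding Dpairs_def S_def S'_def ..
  with p obtain A where A: "A \<in> S" and pA: "p \<in> set_pmf (map_pmf (Pair A) (pmf_of_set (S' A)))"
    using set_pmf_of_set[OF neS fS] by auto
  then obtain A' where "A' \<in> S' A" "p = (A, A')"
    using set_pmf_of_set[OF neS'[OF A] fS'] by auto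
  thus ?thesis using A by (simp add: S_def S'_def)
qed

lemma main_aux:
  fixes d r b :: nat
  assumes H: "even r \<and> 4 \<le> r \<and> real r \<le> 2 powr (-16) * real d \<and> b \<le> 1"
  shows "measure_pmf.prob (Dpairs d r b) {p. B0 d (fst p)} \<le> 2 powr (- (real d / 32)) \<and>
           (\<forall>p \<in> set_pmf (Dpairs d r b). \<not> B0 d (fst p) \<longrightarrow>
              (b = 0 \<longrightarrow> lip d (hardf d r (fst p) (snd p))) \<and>
              (b = 1 \<longrightarrow> ell0 d (hardf d r (fst p) (snd p)) (set (fst p) \<union> set (snd p)) \<ge> 1 / 2))"
proof (intro conjI ballI impI)
  show "measure_pmf.prob (Dpairs d r b) {p. B0 d (fst p)} \<le> 2 powr (- (real d / 32))"
    by (rule part1)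
  have p16: "(2::real) powr (-16) = 1 / 65536"
    by (simp add: powr_minus powr_numeral)
  have rd: "8 * real r \<le> real d / 4" using H unfolding p16 by linarith
  have rb: "r - b \<le> d" using rd by linarith
  fix p assume p: "p \<in> set_pmf (Dpairs d r b)"
  assume nB: "\<not> B0 d (fst p)"
  have P: "length (fst p) = npts d \<and> set (fst p) \<subseteq> cube d \<and> length (snd p) = npts d \<and>
         set (snd p) \<subseteq> cube d \<and> (\<forall>i<npts d. ham (fst p ! i) (snd p ! i) = r - b)"
    using set_Dpairs[OF rb p] .
  interpret hs d r b "fst p" "snd p"
    using P nB H rd by unfold_locales auto
  { assume "b = 0" thus "lip d (hardf d r (fst p) (snd p))" using lip_f by blast }
  { assume "b = 1" thus "ell0 d (hardf d r (fst p) (snd p)) (set (fst p) \<union> set (snd p)) \<ge> 1 / 2"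
    using ell_half by blast }
qed

theorem lemma4p5:
  shows "\<exists>d0::nat. \<forall>d \<ge> d0. \<forall>(r::nat) (b::nat).
           even r \<and> 4 \<le> r \<and> real r \<le> 2 powr (-16) * real d \<and> b \<le> 1 \<longrightarrow>
           measure_pmf.prob (Dpairs d r b) {p. B0 d (fst p)} \<le> 2 powr (- (real d / 32)) \<and>
           (\<forall>p \<in> set_pmf (Dpairs d r b). \<not> B0 d (fst p) \<longrightarrow>
              (b = 0 \<longrightarrow> lip d (hardf d r (fst p) (snd p))) \<and>
              (b = 1 \<longrightarrow> ell0 d (hardf d r (fst p) (snd p)) (set (fst p) \<union> set (snd p)) \<ge> 1 / 2))"
  by (intro exI[of _ 0] allI impI main_aux)

end
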